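(* Let $r_2\geq 3$ and let $c$ be an integer with $1\leq c\leq \frac{r_2-1}{2}$. Then there is no graph with parameters $(r_2,r_3)$ where $r_3=\binom{r_2}{2}-c$.
   Context: All graphs are finite, simple and undirected. The $K_3$-degree of a vertex $v$ is the number of triangles of $G$ containing $v$. A graph $G$ has parameters $(r_2,r_3)$ if every vertex has degree $r_2$ and every vertex has $K_3$-degree $r_3$. *)

theory Defs
  imports Main
begin

definition simple_graph :: "'a set \<Rightarrow> ('a \<Rightarrow> 'a \<Rightarrow> bool) \<Rightarrow> bool" where
  "simple_graph V E \<longleftrightarrow> finite V \<and> (\<forall>x y. E x y \<longrightarrow> x \<in> V \<and> y \<in> V)
     \<and> (\<forall>x y. E x y \<longrightarrow> E y x) \<and> (\<forall>x. \<not> E x x)"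

definition degree :: "'a set \<Rightarrow> ('a \<Rightarrow> 'a \<Rightarrow> bool) \<Rightarrow> 'a \<Rightarrow> nat" where
  "degree V E v = card {u \<in> V. E v u}"

definition triangles :: "'a set \<Rightarrow> ('a \<Rightarrow> 'a \<Rightarrow> bool) \<Rightarrow> 'a set set" where
  "triangles V E = {T. T \<subseteq> V \<and> card T = 3 \<and> (\<forall>x\<in>T. \<forall>y\<in>T. x \<noteq> y \<longrightarrow> E x y)}"

definition K3_degree :: "'a set \<Rightarrow> ('a \<Rightarrow> 'a \<Rightarrow> bool) \<Rightarrow> 'a \<Rightarrow> nat" where
  "K3_degree V E v = card {T \<in> triangles V E. v \<in> T}"

definition has_parameters :: "'a set \<Rightarrow> ('a \<Rightarrow> 'a \<Rightarrow> bool) \<Rightarrow> nat \<Rightarrow> nat \<Rightarrow> bool" where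
  "has_parameters V E r2 r3 \<longleftrightarrow>
     (\<forall>v\<in>V. degree V E v = r2) \<and> (\<forall>v\<in>V. K3_degree V E v = r3)"

end

theory Submission
  imports Defs
begin

definition nb :: "('a \<Rightarrow> 'a \<Rightarrow> bool) \<Rightarrow> 'a \<Rightarrow> 'a set" where
  "nb E x = {u. E x u}"
definition cn :: "('a \<Rightarrow> 'a \<Rightarrow> bool) \<Rightarrow> 'a \<Rightarrow> 'a set" where
  "cn E x = insert x (nb E x)"
definition cls :: "'a set \<Rightarrow> ('a \<Rightarrow> 'a \<Rightarrow> bool) \<Rightarrow> 'a \<Rightarrow> 'a set" where
  "cls V E x = {u\<in>V. cn E u = cn E x}"
definition Qp :: "('a \<Rightarrow> 'a \<Rightarrow> bool) \<Rightarrow> 'a \<Rightarrow> ('a \<times> 'a) set" where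
  "Qp E x = {(u,w). E x u \<and> E x w \<and> u \<noteq> w \<and> \<not> E u w}"

lemma pairs2:
  assumes fin: "finite N" and symR: "\<And>u w. R u w \<Longrightarrow> R w u"
  shows "card {(u,w). u\<in>N \<and> w\<in>N \<and> u\<noteq>w \<and> R u w}
       = 2 * card {e. e \<subseteq> N \<and> card e = 2 \<and> (\<forall>u\<in>e. \<forall>w\<in>e. u\<noteq>w \<longrightarrow> R u w)}"
proof -
  define ES where "ES = {e. e \<subseteq> N \<and> card e = 2 \<and> (\<forall>u\<in>e. \<forall>w\<in>e. u\<noteq>w \<longrightarrow> R u w)}"
  define F where "F e = {(u,w). u\<in>e \<and> w\<in>e \<and> u\<noteq>w}" for e :: "'a set"
  have eq: "{(u,w). u\<in>N \<and> w\<in>N \<and> u\<noteq>w \<and> R u w} = \<Union>(F ` ES)"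
  proof
    show "{(u,w). u\<in>N \<and> w\<in>N \<and> u\<noteq>w \<and> R u w} \<subseteq> \<Union>(F ` ES)"
    proof
      fix p assume "p \<in> {(u,w). u\<in>N \<and> w\<in>N \<and> u\<noteq>w \<and> R u w}"
      then obtain u w where p: "p = (u,w)" "u\<in>N" "w\<in>N" "u\<noteq>w" "R u w" by blast
      have "{u,w} \<in> ES" unfolding ES_def using p symR by auto
      moreover have "p \<in> F {u,w}" unfolding F_def using p by auto
      ultimately show "p \<in> \<Union>(F ` ES)" by blast
    qed
    show "\<Union>(F ` ES) \<subseteq> {(u,w). u\<in>N \<and> w\<in>N \<and> u\<noteq>w \<and> R u w}"
      unfolding F_def ES_def by blast
  qed
  have finES: "finite ES"
  proof -
    have "ES \<subseteq> Pow N" unfolding ES_def by blast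
    then show ?thesis using fin finite_subset by blast
  qed
  have F2: "card (F e) = 2" if "e \<in> ES" for e
  proof -
    have "card e = 2" using that unfolding ES_def by simp
    then obtain a b where ab: "e = {a,b}" "a \<noteq> b" unfolding card_2_iff by blast
    have "F e = {(a,b),(b,a)}" using ab(2) unfolding F_def ab(1) by auto
    then show ?thesis using ab by simp
  qed
  have finF: "finite (F e)" if "e \<in> ES" for e
    using F2[OF that] by (intro card_ge_0_finite) simp
  have disj: "F e \<inter> F e' = {}" if "e \<in> ES" "e' \<in> ES" "e \<noteq> e'" for e e'
  proof (rule ccontr)
    assume "F e \<inter> F e' \<noteq> {}"
    then obtain u w where uw: "(u,w) \<in> F e" "(u,w) \<in> F e'" by auto
    have "e = {u,w}"
    proof -
      have "card e = 2" using that(1) unfolding ES_def by simp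
    then obtain a b where ab: "e = {a,b}" "a \<noteq> b" unfolding card_2_iff by blast
      then show ?thesis using uw(1) unfolding F_def by auto
    qed
    moreover have "e' = {u,w}"
    proof -
      have "card e' = 2" using that(2) unfolding ES_def by simp
    then obtain a b where ab: "e' = {a,b}" "a \<noteq> b" unfolding card_2_iff by blast
      then show ?thesis using uw(2) unfolding F_def by auto
    qed
    ultimately show False using that(3) by simp
  qed
  have h1: "\<forall>e\<in>ES. finite (F e)" using finF by blast
  have h2: "\<forall>i\<in>ES. \<forall>j\<in>ES. i \<noteq> j \<longrightarrow> F i \<inter> F j = {}" using disj by blast
  have "card (\<Union>(F ` ES)) = (\<Sum>e\<in>ES. card (F e))"
    by (rule card_UN_disjoint[OF finES h1 h2])
  also have "\<dots> = (\<Sum>e\<in>ES. 2)" using F2 by simp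
  also have "\<dots> = 2 * card ES" by simp
  finally show ?thesis using eq ES_def by simp
qed

lemma base:
  assumes G: "simple_graph V E" and v: "v \<in> V"
  shows "card (nb E v) = degree V E v"
    and "card (Qp E v) + 2 * K3_degree V E v = degree V E v * degree V E v - degree V E v"
proof -
  have sym: "\<And>u w. E u w \<Longrightarrow> E w u" and irr: "\<And>u. \<not> E u u" and inV: "\<And>u w. E u w \<Longrightarrow> w \<in> V"
    and finV: "finite V"
    using G unfolding simple_graph_def by blast+
  define N where "N = nb E v"
  have NV: "N = {u\<in>V. E v u}" unfolding N_def nb_def using inV by blast
  show cN: "card (nb E v) = degree V E v" unfolding degree_def using NV N_def by simp
  define r where "r = degree V E v"
  have finN: "finite N" using NV finV by simp
  have vN: "v \<notin> N" unfolding N_def nb_def using irr by simp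
  define P where "P = {(u,w). u\<in>N \<and> w\<in>N \<and> u\<noteq>w \<and> E u w}"
  define ES where "ES = {e. e \<subseteq> N \<and> card e = 2 \<and> (\<forall>u\<in>e. \<forall>w\<in>e. u\<noteq>w \<longrightarrow> E u w)}"
  have cP: "card P = 2 * card ES" unfolding P_def ES_def by (rule pairs2[OF finN sym])
  have Qeq: "Qp E v = {(u,w). u\<in>N \<and> w\<in>N \<and> u\<noteq>w \<and> \<not> E u w}"
    unfolding Qp_def N_def nb_def by simp
  have Off: "P \<union> Qp E v = N \<times> N - (\<lambda>u. (u,u)) ` N" unfolding Qeq P_def by auto
  have dis: "P \<inter> Qp E v = {}" unfolding Qeq P_def by auto
  have finP': "P \<subseteq> N \<times> N" unfolding P_def by auto
  have finQ': "Qp E v \<subseteq> N \<times> N" unfolding Qeq by auto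
  have finNN: "finite (N \<times> N)" using finN by simp
  have "card (P \<union> Qp E v) = card P + card (Qp E v)"
    using card_Un_disjoint[OF finite_subset[OF finP' finNN] finite_subset[OF finQ' finNN] dis] .
  moreover have "card (N \<times> N - (\<lambda>u. (u,u)) ` N) = r * r - r"
  proof -
    have "card ((\<lambda>u. (u,u)) ` N) = card N" by (rule card_image) (simp add: inj_on_def)
    moreover have "(\<lambda>u. (u,u)) ` N \<subseteq> N \<times> N" by auto
    ultimately have "card (N \<times> N - (\<lambda>u. (u,u)) ` N) = card (N \<times> N) - card N"
      using card_Diff_subset[OF finite_imageI[OF finN]] by metis
    then show ?thesis using cN N_def r_def by (simp add: card_cartesian_product)
  qed
  ultimately have A: "card P + card (Qp E v) = r * r - r" using Off by simp
  have "bij_betw (insert v) ES {T\<in>triangles V E. v\<in>T}"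
  proof (rule bij_betw_imageI)
    show "inj_on (insert v) ES"
    proof (rule inj_onI)
      fix e e' assume "e \<in> ES" "e' \<in> ES" "insert v e = insert v e'"
      moreover have "v \<notin> e" "v \<notin> e'" using \<open>e \<in> ES\<close> \<open>e' \<in> ES\<close> vN unfolding ES_def by auto
      ultimately show "e = e'" by (metis Diff_insert_absorb)
    qed
    show "insert v ` ES = {T\<in>triangles V E. v\<in>T}"
    proof
      show "insert v ` ES \<subseteq> {T\<in>triangles V E. v\<in>T}"
      proof
        fix T assume "T \<in> insert v ` ES"
        then obtain e where e: "e \<in> ES" "T = insert v e" by blast
        have eN: "e \<subseteq> N" and ce: "card e = 2" and pe: "\<forall>u\<in>e. \<forall>w\<in>e. u\<noteq>w \<longrightarrow> E u w"
          using e(1) unfolding ES_def by auto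
        have fe: "finite e" using finN eN finite_subset by blast
        have ve: "v \<notin> e" using eN vN by blast
        have "card T = 3" using e(2) fe ve ce by simp
        moreover have "N \<subseteq> V" unfolding NV by blast
        then have "T \<subseteq> V" using e(2) eN v by blast
        moreover have "\<forall>x\<in>T. \<forall>y\<in>T. x \<noteq> y \<longrightarrow> E x y"
        proof (intro ballI impI)
          fix x y assume xy: "x \<in> T" "y \<in> T" "x \<noteq> y"
          show "E x y"
          proof (cases "x = v")
            case True
            then have "y \<in> N" using xy e(2) eN by blast
            then show ?thesis using True unfolding NV by simp
          next
            case False
            then have xN: "x \<in> e" using xy e(2) by blast
            show ?thesis
            proof (cases "y = v")
              case True
              have "x \<in> N" using xN eN by blast
              then have "E v x" unfolding NV by simp
              then show ?thesis using True sym by blast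
            next
              case False
              then have "y \<in> e" using xy e(2) by blast
              then show ?thesis using pe xN xy(3) by blast
            qed
          qed
        qed
        ultimately show "T \<in> {T\<in>triangles V E. v\<in>T}" unfolding triangles_def using e(2) by blast
      qed
      show "{T\<in>triangles V E. v\<in>T} \<subseteq> insert v ` ES"
      proof
        fix T assume "T \<in> {T\<in>triangles V E. v\<in>T}"
        then have T: "T \<subseteq> V" "card T = 3" "\<forall>x\<in>T. \<forall>y\<in>T. x \<noteq> y \<longrightarrow> E x y" "v \<in> T"
          unfolding triangles_def by auto
        have fT: "finite T" using T(2) by (intro card_ge_0_finite) simp
        have "T - {v} \<subseteq> N"
        proof
          fix u assume u: "u \<in> T - {v}"
          then have "u \<in> T" "v \<noteq> u" by auto
          then have "E v u" using T(3,4) by simp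
          moreover have "u \<in> V" using u T(1) by blast
          ultimately show "u \<in> N" unfolding NV by simp
        qed
        moreover have "card (T - {v}) = 2" using T(2,4) fT by simp
        moreover have "\<forall>u\<in>T-{v}. \<forall>w\<in>T-{v}. u\<noteq>w \<longrightarrow> E u w" using T(3) by blast
        ultimately have "T - {v} \<in> ES" unfolding ES_def by blast
        moreover have "T = insert v (T - {v})" using T(4) by blast
        ultimately show "T \<in> insert v ` ES" by blast
      qed
    qed
  qed
  then have "card ES = K3_degree V E v" unfolding K3_degree_def by (rule bij_betw_same_card)
  then show "card (Qp E v) + 2 * K3_degree V E v = degree V E v * degree V E v - degree V E v"
    using A cP r_def by simp
qed

context
  fixes V :: "'a set" and E :: "'a \<Rightarrow> 'a \<Rightarrow> bool" and r c :: nat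
  assumes G: "simple_graph V E"
    and deg: "\<And>v. v \<in> V \<Longrightarrow> card (nb E v) = r"
    and Qc: "\<And>v. v \<in> V \<Longrightarrow> card (Qp E v) = 2 * c"
begin

lemma sym: "E u v \<Longrightarrow> E v u" using G unfolding simple_graph_def by blast
lemma irr: "\<not> E u u" using G unfolding simple_graph_def by blast
lemma inV: "E u v \<Longrightarrow> v \<in> V" using G unfolding simple_graph_def by blast
lemma finV: "finite V" using G unfolding simple_graph_def by blast

lemma nb_sub: "nb E x \<subseteq> V" using inV unfolding nb_def by blast
lemma fin_nb: "finite (nb E x)" using nb_sub finV finite_subset by blast
lemma fin_cn: "finite (cn E x)" using fin_nb unfolding cn_def by simp
lemma card_cn: "x \<in> V \<Longrightarrow> card (cn E x) = r + 1"
  using fin_nb deg irr unfolding cn_def nb_def by (simp add: card_insert_if)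
lemma cn_sym: "u \<in> cn E v \<longleftrightarrow> v \<in> cn E u"
  unfolding cn_def nb_def using sym by blast
lemma self_cn: "x \<in> cn E x" unfolding cn_def by simp

lemma diff_ex:
  assumes "x \<in> V" "y \<in> V" "cn E x \<noteq> cn E y"
  shows "\<exists>w. w \<in> cn E y \<and> w \<notin> cn E x"
proof (rule ccontr)
  assume "\<not> ?thesis"
  then have "cn E y \<subseteq> cn E x" by blast
  then have "cn E y = cn E x" using card_subset_eq[OF fin_cn] card_cn assms by metis
  then show False using assms by simp
qed

lemma fin_Qp: "finite (Qp E x)"
proof -
  have "Qp E x \<subseteq> nb E x \<times> nb E x" unfolding Qp_def nb_def by auto
  then show ?thesis using fin_nb finite_subset by blast
qed

lemma cls_fin: "finite (cls V E x)" using finV unfolding cls_def by simp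
lemma cls_sub: "cls V E x \<subseteq> cn E x" unfolding cls_def using self_cn by blast

lemma cls_big:
  assumes "x \<in> V"
  shows "r + 1 \<le> card (cls V E x) + 2 * c"
proof -
  define D0 where "D0 = fst ` Qp E x"
  have cD: "card D0 \<le> 2 * c" unfolding D0_def using card_image_le[OF fin_Qp] Qc assms by metis
  have sub: "insert x (nb E x - D0) \<subseteq> cls V E x"
  proof
    fix u assume u: "u \<in> insert x (nb E x - D0)"
    show "u \<in> cls V E x"
    proof (cases "u = x")
      case True then show ?thesis using assms unfolding cls_def by simp
    next
      case False
      then have u1: "E x u" and u2: "u \<notin> D0" using u unfolding nb_def by auto
      have all: "\<And>w. E x w \<Longrightarrow> w \<noteq> u \<Longrightarrow> E u w"
      proof (rule ccontr)
        fix w assume "E x w" "w \<noteq> u" "\<not> E u w"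
        then have "(u,w) \<in> Qp E x" using u1 unfolding Qp_def by auto
        then have "u \<in> D0" unfolding D0_def by force
        then show False using u2 by simp
      qed
      have "cn E x \<subseteq> cn E u"
        unfolding cn_def nb_def using all sym[OF u1] by blast
      then have "cn E x = cn E u" using card_subset_eq[OF fin_cn] card_cn assms inV[OF u1] by metis
      then show ?thesis using inV[OF u1] unfolding cls_def by simp
    qed
  qed
  have "x \<notin> nb E x" using irr unfolding nb_def by simp
  then have "card (insert x (nb E x - D0)) = Suc (card (nb E x - D0))"
    using fin_nb by simp
  moreover have "card (nb E x) - card D0 \<le> card (nb E x - D0)"
    using diff_card_le_card_Diff D0_def fin_Qp by blast
  moreover have "card (insert x (nb E x - D0)) \<le> card (cls V E x)"
    using card_mono[OF cls_fin sub] .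
  ultimately show ?thesis using deg[OF assms] cD by linarith
qed

lemma contra:
  assumes "V \<noteq> {}" "1 \<le> c" "2 * c + 1 \<le> r"
  shows False
proof -
  define s where "s = r + 1 - 2 * c"
  have s2: "2 \<le> s" using assms unfolding s_def by simp
  have clsV: "\<And>v. v \<in> V \<Longrightarrow> s \<le> card (cls V E v)" using cls_big unfolding s_def by fastforce
  obtain x where x: "x \<in> V" using assms by blast
  define a where "a = card (cls V E x)"
  have "card (Qp E x) \<noteq> 0" using Qc[OF x] assms by simp
  then have "Qp E x \<noteq> {}" by (metis card.empty)
  then obtain p where "p \<in> Qp E x" by blast
  then obtain y z where yz: "(y,z) \<in> Qp E x" by (cases p) auto
  then have y: "E x y" "E x z" "y \<noteq> z" "\<not> E y z" unfolding Qp_def by auto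
  have yV: "y \<in> V" using inV y by blast
  have ncn: "cn E y \<noteq> cn E x"
  proof
    assume "cn E y = cn E x"
    moreover have "z \<in> cn E x" unfolding cn_def nb_def using y by simp
    ultimately have "z \<in> cn E y" by simp
    then show False using y unfolding cn_def nb_def by auto
  qed
  obtain w where w: "w \<in> cn E y" "w \<notin> cn E x" using diff_ex[OF x yV] ncn by metis
  have yx: "y \<in> cn E x" "x \<in> cn E y" unfolding cn_def nb_def using y sym by auto
  have wy: "w \<noteq> y" using w yx by blast
  have wE: "E y w" using w wy unfolding cn_def nb_def by simp
  have wV: "w \<in> V" using inV wE by blast
  have prod: "cls V E x \<times> cls V E w \<subseteq> Qp E y"
  proof
    fix p assume "p \<in> cls V E x \<times> cls V E w"
    then obtain t t' where p: "p = (t,t')" and t: "t \<in> V" "cn E t = cn E x"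
      and t': "t' \<in> V" "cn E t' = cn E w" unfolding cls_def by auto
    have "y \<in> cn E t" using yx t by simp
    then have "t \<in> cn E y" by (rule cn_sym[THEN iffD1])
    moreover have "t \<noteq> y" using t ncn by auto
    ultimately have 1: "E y t" unfolding cn_def nb_def by simp
    have "y \<in> cn E w" using w(1) by (rule cn_sym[THEN iffD1])
    then have "y \<in> cn E t'" using t' by simp
    then have "t' \<in> cn E y" by (rule cn_sym[THEN iffD1])
    moreover have "t' \<noteq> y"
    proof
      assume "t' = y"
      then have "x \<in> cn E w" using yx t' by simp
      then have "w \<in> cn E x" by (rule cn_sym[THEN iffD1])
      then show False using w by simp
    qed
    ultimately have 2: "E y t'" unfolding cn_def nb_def by simp
    have 3: "t \<noteq> t'"
    proof
      assume "t = t'"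
      then have "cn E x = cn E w" using t t' by simp
      then show False using w self_cn[of w] by simp
    qed
    have 4: "\<not> E t t'"
    proof
      assume "E t t'"
      then have "t' \<in> cn E x" using t unfolding cn_def nb_def by auto
      then have "x \<in> cn E t'" by (rule cn_sym[THEN iffD1])
      then have "x \<in> cn E w" using t' by simp
      then have "w \<in> cn E x" by (rule cn_sym[THEN iffD1])
      then show False using w by simp
    qed
    show "p \<in> Qp E y" using p 1 2 3 4 unfolding Qp_def by simp
  qed
  have "a * card (cls V E w) \<le> 2 * c"
    using card_mono[OF fin_Qp prod] Qc[OF yV] unfolding a_def card_cartesian_product by simp
  moreover have "s \<le> card (cls V E w)" using clsV wV by simp
  ultimately have b2: "a * s \<le> 2 * c"
    by (meson le_trans mult_le_mono2)
  define A where "A = nb E x - cls V E x"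
  have sig: "Sigma A (\<lambda>y. nb E x - cn E y) \<subseteq> Qp E x"
    unfolding A_def Qp_def nb_def cn_def by auto
  have fib: "\<And>y'. y' \<in> A \<Longrightarrow> s \<le> card (nb E x - cn E y')"
  proof -
    fix y' assume y': "y' \<in> A"
    then have y'1: "E x y'" "y' \<notin> cls V E x" unfolding A_def nb_def by auto
    have y'V: "y' \<in> V" using inV y'1 by blast
    have ne: "cn E x \<noteq> cn E y'" using y'1 y'V unfolding cls_def by auto
    obtain z' where z': "z' \<in> cn E x" "z' \<notin> cn E y'" using diff_ex[OF y'V x] ne by metis
    have xy': "x \<in> cn E y'" "y' \<in> cn E x" unfolding cn_def nb_def using y'1 sym by auto
    have z'V: "z' \<in> V" using z' x inV unfolding cn_def nb_def by auto
    have "cls V E z' \<subseteq> nb E x - cn E y'"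
    proof
      fix t assume "t \<in> cls V E z'"
      then have t: "t \<in> V" "cn E t = cn E z'" unfolding cls_def by auto
      have "x \<in> cn E z'" using z'(1) by (rule cn_sym[THEN iffD1])
      then have "x \<in> cn E t" using t by simp
      then have tx: "t \<in> cn E x" by (rule cn_sym[THEN iffD1])
      have tnx: "t \<noteq> x"
      proof
        assume "t = x"
        then have "y' \<in> cn E z'" using t xy' by simp
        then have "z' \<in> cn E y'" by (rule cn_sym[THEN iffD1])
        then show False using z' by simp
      qed
      have "t \<notin> cn E y'"
      proof
        assume "t \<in> cn E y'"
        then have "y' \<in> cn E t" by (rule cn_sym[THEN iffD1])
        then have "y' \<in> cn E z'" using t by simp
        then have "z' \<in> cn E y'" by (rule cn_sym[THEN iffD1])
        then show False using z' by simp
      qed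
      then show "t \<in> nb E x - cn E y'" using tx tnx unfolding cn_def by auto
    qed
    then have "card (cls V E z') \<le> card (nb E x - cn E y')"
      using card_mono[OF finite_Diff[OF fin_nb]] by blast
    then show "s \<le> card (nb E x - cn E y')" using clsV[OF z'V] by simp
  qed
  have finA: "finite A" unfolding A_def using fin_nb by simp
  have "s * card A = (\<Sum>y'\<in>A. s)" by simp
  also have "\<dots> \<le> (\<Sum>y'\<in>A. card (nb E x - cn E y'))" using fib by (meson sum_mono)
  also have "\<dots> = card (Sigma A (\<lambda>y. nb E x - cn E y))" using finA fin_nb by simp
  also have "\<dots> \<le> 2 * c" using card_mono[OF fin_Qp sig] Qc[OF x] by simp
  finally have b3: "s * card A \<le> 2 * c" .
  have "nb E x \<inter> cls V E x \<subseteq> cls V E x - {x}" using irr unfolding nb_def by auto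
  then have "card (nb E x \<inter> cls V E x) \<le> card (cls V E x - {x})"
    using card_mono[OF finite_Diff[OF cls_fin]] by blast
  moreover have "x \<in> cls V E x" using x unfolding cls_def by simp
  ultimately have "card (nb E x \<inter> cls V E x) \<le> a - 1" unfolding a_def
    using cls_fin by simp
  moreover have "card A = card (nb E x) - card (nb E x \<inter> cls V E x)"
    unfolding A_def by (rule card_Diff_subset_Int[OF finite_Int[OF disjI1[OF fin_nb]]])
  moreover have "a \<ge> 1" using clsV[OF x] s2 unfolding a_def by simp
  ultimately have cA: "r + 1 - a \<le> card A" using deg[OF x] by linarith
  have "s * (r + 1 - a) \<le> 2 * c" using b3 cA by (meson le_trans mult_le_mono2)
  then have "s * (r + 1 - a) + s * a \<le> 4 * c" using b2 by (simp add: mult.commute)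
  moreover have "a \<le> r + 1" unfolding a_def using card_mono[OF fin_cn cls_sub, of x] card_cn[OF x] by linarith
  ultimately have "s * (r + 1) \<le> 4 * c" by (metis add_mult_distrib2 le_add_diff_inverse2)
  moreover have "2 * (r + 1) \<le> s * (r + 1)" using s2 by (rule mult_le_mono1)
  ultimately have "2 * (r + 1) \<le> 4 * c" by (rule le_trans[rotated])
  then show False using assms(3) by simp
qed

end

lemma two_choose: "2 * (n choose 2) = n * n - (n::nat)"
proof -
  have "even (n * (n - 1))" by (cases "even n") auto
  then have "2 * (n * (n - 1) div 2) = n * (n - 1)" by simp
  moreover have "n * (n - 1) = n * n - n" by (simp add: diff_mult_distrib2)
  ultimately show ?thesis by (simp add: choose_two)
qed

theorem theorem3p6:
  fixes V :: "'a set" and E :: "'a \<Rightarrow> 'a \<Rightarrow> bool" and r2 c :: nat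
  assumes "r2 \<ge> 3" and "1 \<le> c" and "2 * c \<le> r2 - 1"
    and "simple_graph V E" and "V \<noteq> {}"
  shows "\<not> has_parameters V E r2 ((r2 choose 2) - c)"
proof
  assume hp: "has_parameters V E r2 ((r2 choose 2) - c)"
  have dg: "\<And>v. v \<in> V \<Longrightarrow> degree V E v = r2" and k3: "\<And>v. v \<in> V \<Longrightarrow> K3_degree V E v = (r2 choose 2) - c"
    using hp unfolding has_parameters_def by auto
  have tc: "2 * (r2 choose 2) = r2 * r2 - r2" by (rule two_choose)
  have h1: "2 * (r2 - 1) \<le> r2 * (r2 - 1)" using assms(1) by (intro mult_le_mono1) simp
  have h2: "r2 * (r2 - 1) = r2 * r2 - r2" by (simp add: diff_mult_distrib2)
  have "2 * (r2 - 1) \<le> 2 * (r2 choose 2)" using h1 h2 tc by metis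
  then have cle: "c \<le> r2 choose 2" using assms(3) by simp
  have D: "\<And>v. v \<in> V \<Longrightarrow> card (nb E v) = r2" using base(1)[OF assms(4)] dg by simp
  have Q: "\<And>v. v \<in> V \<Longrightarrow> card (Qp E v) = 2 * c"
  proof -
    fix v assume v: "v \<in> V"
    have "card (Qp E v) + 2 * ((r2 choose 2) - c) = r2 * r2 - r2"
      using base(2)[OF assms(4) v] dg[OF v] k3[OF v] by simp
    then show "card (Qp E v) = 2 * c" using tc cle by simp
  qed
  have "2 * c + 1 \<le> r2" using assms(3) assms(1) by linarith
  then show False using contra[OF assms(4) D Q assms(5) assms(2)] by blast
qed

end
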